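(* Let $G$ be a simple graph and let $G'$ be obtained from $G$ by a symmetric $\mathcal K_{xy}$-operation. Then $c_s(G)\ge c_s(G')$ for every $s\in\{0,1,\dots,v(G)-1\}$.
   Context: All graphs are finite, undirected, without loops. For a graph $G$ on $n$ vertices let $L(G)=D(G)-A(G)$ be its Laplacian matrix. Write $\det(\lambda I-L(G))=\lambda P(\lambda,G)$ with $P(\lambda,G)=\sum_{s=0}^{n-1}(-1)^s c_s(G)\lambda^{n-1-s}$ (the Laplacian polynomial); equivalently $c_s(G)=\sum_F\gamma(F)$, the sum over spanning forests $F$ of $G$ with $s$ edges, where $\gamma(F)$ is the product of the numbers of vertices of the components of $F$. $\mathcal K_{xy}$-operation: let $G$ be a simple graph, $x\ne y$ vertices, $\mathcal K$ an induced subgraph of $G$ containing $x$ and $y$, and $N(v)$ the neighbourhood of $v$. Put $X=N(x)\setminus(V(\mathcal K)\cup N(y))$, $Y=N(y)\setminus(V(\mathcal K)\cup N(x))$, $[x,X]=\{xv:v\in X\}$, $[y,X]=\{yv:v\in X\}$, $[y,Y]=\{yv:v\in Y\}$. The graph $\mathcal K_{xy}(G)=(G-[x,X])\cup[y,X]$ (on the same vertex set) is obtained from $G$ by the $\mathcal K_{xy}$-operation. The operation is called symmetric if the graph $G-([x,X]\cup[y,Y])$ has an automorphism $\alpha$ with $\alpha(x)=y$, $\alpha(y)=x$, $\alpha(V(\mathcal K))=V(\mathcal K)$, and $\alpha(v)=v$ for every $v\in X\cup Y$. *)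

theory Defs
  imports Main
begin

definition simple_graph :: "'a set \<Rightarrow> 'a set set \<Rightarrow> bool" where
  "simple_graph V E \<longleftrightarrow> finite V \<and> (\<forall>e\<in>E. \<exists>u v. e = {u, v} \<and> u \<noteq> v \<and> u \<in> V \<and> v \<in> V)"

definition nbhd :: "'a set set \<Rightarrow> 'a \<Rightarrow> 'a set" where
  "nbhd E v = {u. {u, v} \<in> E}"

definition adj_rel :: "'a set set \<Rightarrow> ('a \<times> 'a) set" where
  "adj_rel F = {(u, v). {u, v} \<in> F}"

definition connected_in :: "'a set set \<Rightarrow> 'a \<Rightarrow> 'a \<Rightarrow> bool" where
  "connected_in F u v \<longleftrightarrow> (u, v) \<in> (adj_rel F)\<^sup>*"

definition acyclic_edges :: "'a set set \<Rightarrow> bool" where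
  "acyclic_edges F \<longleftrightarrow> (\<forall>u v. {u, v} \<in> F \<longrightarrow> \<not> connected_in (F - {{u, v}}) u v)"

text \<open>Spanning forest of (V,E) with s edges (spanning: vertex set is V).\<close>
definition spanning_forests :: "'a set set \<Rightarrow> nat \<Rightarrow> 'a set set set" where
  "spanning_forests E s = {F. F \<subseteq> E \<and> acyclic_edges F \<and> card F = s}"

definition components :: "'a set \<Rightarrow> 'a set set \<Rightarrow> 'a set set" where
  "components V F = (\<lambda>v. {w \<in> V. connected_in F v w}) ` V"

definition gamma :: "'a set \<Rightarrow> 'a set set \<Rightarrow> nat" where
  "gamma V F = (\<Prod>C\<in>components V F. card C)"

definition lap_coeff :: "'a set \<Rightarrow> 'a set set \<Rightarrow> nat \<Rightarrow> nat" where
  "lap_coeff V E s = (\<Sum>F\<in>spanning_forests E s. gamma V F)"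

definition Xset :: "'a set set \<Rightarrow> 'a set \<Rightarrow> 'a \<Rightarrow> 'a \<Rightarrow> 'a set" where
  "Xset E K x y = nbhd E x - (K \<union> nbhd E y)"

definition star_edges :: "'a \<Rightarrow> 'a set \<Rightarrow> 'a set set" where
  "star_edges x X = {{x, v} | v. v \<in> X}"

text \<open>The K_xy-operation (K given by its vertex set; the induced subgraph is determined by it).\<close>
definition Kxy_op :: "'a set set \<Rightarrow> 'a set \<Rightarrow> 'a \<Rightarrow> 'a \<Rightarrow> 'a set set" where
  "Kxy_op E K x y = (E - star_edges x (Xset E K x y)) \<union> star_edges y (Xset E K x y)"

definition graph_automorphism :: "'a set \<Rightarrow> 'a set set \<Rightarrow> ('a \<Rightarrow> 'a) \<Rightarrow> bool" where
  "graph_automorphism V E \<alpha> \<longleftrightarrow> bij_betw \<alpha> V V \<and>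
     (\<forall>u\<in>V. \<forall>v\<in>V. {u, v} \<in> E \<longleftrightarrow> {\<alpha> u, \<alpha> v} \<in> E)"

definition symmetric_Kxy :: "'a set \<Rightarrow> 'a set set \<Rightarrow> 'a set \<Rightarrow> 'a \<Rightarrow> 'a \<Rightarrow> bool" where
  "symmetric_Kxy V E K x y \<longleftrightarrow>
     (\<exists>\<alpha>. graph_automorphism V (E - (star_edges x (Xset E K x y) \<union> star_edges y (Xset E K y x))) \<alpha>
        \<and> \<alpha> x = y \<and> \<alpha> y = x \<and> \<alpha> ` K = K
        \<and> (\<forall>v \<in> Xset E K x y \<union> Xset E K y x. \<alpha> v = v))"

end

theory Submission
  imports Defs
begin
abbreviation conn where "conn F u v \<equiv> connected_in F u v"

lemma conn_refl[simp]: "conn F u u"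
  by (simp add: connected_in_def)

lemma adj_sym: "sym (adj_rel F)"
  by (auto simp: sym_def adj_rel_def insert_commute)
lemma conn_sym: "conn F u v \<Longrightarrow> conn F v u"
  unfolding connected_in_def by (rule symD[OF sym_rtrancl[OF adj_sym]])

lemma conn_trans: "conn F u v \<Longrightarrow> conn F v w \<Longrightarrow> conn F u w"
  unfolding connected_in_def by (rule rtrancl_trans)

lemma conn_edge: "{u,v} \<in> F \<Longrightarrow> conn F u v"
  unfolding connected_in_def adj_rel_def by (rule r_into_rtrancl) simp

lemma conn_mono: assumes "F \<subseteq> F'" "conn F u v" shows "conn F' u v"
proof -
  have "adj_rel F \<subseteq> adj_rel F'" using assms(1) by (auto simp: adj_rel_def)
  then show ?thesis using assms(2) unfolding connected_in_def by (rule subsetD[OF rtrancl_mono])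
qed

lemma adj_rel_insert: "adj_rel (insert {a,b} F) = insert (b,a) (insert (a,b) (adj_rel F))"
  by (auto simp: adj_rel_def doubleton_eq_iff)

lemma conn_insert: "conn (insert {a,b} F) u v \<longleftrightarrow>
   conn F u v \<or> (conn F u a \<and> conn F b v) \<or> (conn F u b \<and> conn F a v)"
proof
  assume H: "conn (insert {a,b} F) u v"
  have "conn F u v \<or> (conn F u a \<and> conn F b v) \<or> ((conn F u b \<or> conn F u a) \<and> (conn F a v \<or> conn F b v))"
    using H unfolding connected_in_def adj_rel_insert by (simp add: rtrancl_insert)
  then show "conn F u v \<or> (conn F u a \<and> conn F b v) \<or> (conn F u b \<and> conn F a v)"
    using conn_trans by metis
next
  have e1: "conn (insert {a,b} F) a b" "conn (insert {a,b} F) b a"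
    by (auto intro: conn_edge simp: insert_commute)
  have m: "conn F p q \<Longrightarrow> conn (insert {a,b} F) p q" for p q
    by (rule conn_mono[of F]) auto
  assume "conn F u v \<or> (conn F u a \<and> conn F b v) \<or> (conn F u b \<and> conn F a v)"
  then show "conn (insert {a,b} F) u v"
    using e1 m conn_trans by metis
qed

lemma acyclic_mono: assumes "F \<subseteq> F'" "acyclic_edges F'" shows "acyclic_edges F"
  unfolding acyclic_edges_def
proof (intro allI impI notI)
  fix u v assume uv: "{u,v} \<in> F" and c: "conn (F - {{u,v}}) u v"
  have "conn (F' - {{u,v}}) u v" by (rule conn_mono[OF _ c]) (use assms(1) in blast)
  moreover have "{u,v} \<in> F'" using uv assms(1) by blast
  ultimately show False using assms(2) unfolding acyclic_edges_def by blast
qed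

lemma acyclic_insert:
  assumes "a \<noteq> b" "{a,b} \<notin> F"
  shows "acyclic_edges (insert {a,b} F) \<longleftrightarrow> acyclic_edges F \<and> \<not> conn F a b"
proof
  assume A: "acyclic_edges (insert {a,b} F)"
  have "acyclic_edges F" by (rule acyclic_mono[OF _ A]) auto
  moreover have "insert {a,b} F - {{a,b}} = F" using assms by auto
  then have "\<not> conn F a b" using A unfolding acyclic_edges_def by force
  ultimately show "acyclic_edges F \<and> \<not> conn F a b" by blast
next
  assume A: "acyclic_edges F \<and> \<not> conn F a b"
  show "acyclic_edges (insert {a,b} F)"
    unfolding acyclic_edges_def
  proof (intro allI impI)
    fix u v assume uv: "{u,v} \<in> insert {a,b} F"
    show "\<not> conn (insert {a, b} F - {{u, v}}) u v"
    proof (cases "{u,v} = {a,b}")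
      case True
      then have e: "insert {a, b} F - {{u, v}} = F" using assms by auto
      have "(u = a \<and> v = b) \<or> (u = b \<and> v = a)" using True by (simp add: doubleton_eq_iff)
      then show ?thesis unfolding e using A by (metis conn_sym)
    next
      case False
      then have uvF: "{u,v} \<in> F" using uv by auto
      have eq: "insert {a, b} F - {{u, v}} = insert {a,b} (F - {{u,v}})" using False by auto
      have nc: "\<not> conn (F - {{u,v}}) u v" using A uvF unfolding acyclic_edges_def by blast
      have ce: "conn F u v" "conn F v u" using uvF by (auto intro: conn_edge simp: insert_commute)
      have m: "conn (F - {{u,v}}) p q \<Longrightarrow> conn F p q" for p q by (erule conn_mono[rotated]) auto
      show ?thesis
      proof
        assume "conn (insert {a, b} F - {{u, v}}) u v"
        then have "conn (F - {{u,v}}) u v \<or> (conn (F - {{u,v}}) u a \<and> conn (F - {{u,v}}) b v)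
           \<or> (conn (F - {{u,v}}) u b \<and> conn (F - {{u,v}}) a v)"
          unfolding eq conn_insert .
        moreover
        { assume "conn (F - {{u,v}}) u a \<and> conn (F - {{u,v}}) b v"
          then have "conn F a u" "conn F v b" using m conn_sym by (metis, metis)
          then have "conn F a b" using ce conn_trans by metis
          then have False using A by simp }
        moreover
        { assume "conn (F - {{u,v}}) u b \<and> conn (F - {{u,v}}) a v"
          then have "conn F b u" "conn F v a" using m conn_sym by (metis, metis)
          then have "conn F a b" using ce conn_trans conn_sym by metis
          then have False using A by simp }
        ultimately show False using nc by blast
      qed
    qed
  qed
qed

lemma not_acyclic_conn:
  assumes "{a,b} \<in> F'" "F \<subseteq> F' - {{a,b}}" "conn F a b" shows "\<not> acyclic_edges F'"
  using assms conn_mono[OF assms(2,3)] unfolding acyclic_edges_def by metis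

definition cls :: "'a set \<Rightarrow> 'a set set \<Rightarrow> 'a \<Rightarrow> 'a set" where
  "cls V F v = {w \<in> V. conn F v w}"

lemma components_cls: "components V F = cls V F ` V"
  by (simp add: components_def cls_def)

lemma gamma_cls: "gamma V F = (\<Prod>C\<in>cls V F ` V. card C)"
  by (simp add: gamma_def components_cls)

lemma cls_eq: "conn F v a \<Longrightarrow> cls V F v = cls V F a"
  unfolding cls_def by (metis conn_sym conn_trans)

lemma cls_mem: "a \<in> V \<Longrightarrow> a \<in> cls V F a"
  by (simp add: cls_def)

lemma cls_memD: "w \<in> cls V F v \<Longrightarrow> conn F v w"
  by (simp add: cls_def)

lemma cls_insert:
  assumes nc: "\<not> conn F a b"
  shows "cls V (insert {a,b} F) v =
     (if conn F v a \<or> conn F v b then cls V F a \<union> cls V F b else cls V F v)"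
proof (cases "conn F v a")
  case True
  then have nb: "\<not> conn F v b" using nc by (metis conn_sym conn_trans)
  have "w \<in> cls V (insert {a,b} F) v \<longleftrightarrow> w \<in> cls V F a \<union> cls V F b" for w
    unfolding cls_def mem_Collect_eq Un_iff conn_insert
    using True nb by (metis conn_sym conn_trans)
  then show ?thesis using True by auto
next
  case False
  note F1 = False
  show ?thesis
  proof (cases "conn F v b")
    case True
    then have na: "\<not> conn F v a" using F1 by blast
    have "w \<in> cls V (insert {a,b} F) v \<longleftrightarrow> w \<in> cls V F a \<union> cls V F b" for w
      unfolding cls_def mem_Collect_eq Un_iff conn_insert
      using True na by (metis conn_sym conn_trans)
    then show ?thesis using True by auto
  next
    case False
    have "w \<in> cls V (insert {a,b} F) v \<longleftrightarrow> w \<in> cls V F v" for w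
      unfolding cls_def mem_Collect_eq conn_insert
      using False F1 by blast
    then show ?thesis using False F1 by auto
  qed
qed

lemma cls_insert_a:
  assumes nc: "\<not> conn F a b"
  shows "cls V (insert {a,b} F) a = cls V F a \<union> cls V F b"
  using cls_insert[OF nc, of V a] by simp

lemma card_cls_insert_a:
  assumes fin: "finite V" and nc: "\<not> conn F a b"
  shows "card (cls V (insert {a,b} F) a) = card (cls V F a) + card (cls V F b)"
proof -
  have "cls V F a \<inter> cls V F b = {}"
    using nc unfolding cls_def by (auto dest: conn_sym conn_trans)
  moreover have "finite (cls V F a)" "finite (cls V F b)" using fin by (auto simp: cls_def)
  ultimately show ?thesis unfolding cls_insert_a[OF nc] by (simp add: card_Un_disjoint)
qed

lemma gamma_insert:
  assumes fin: "finite V" and aV: "a \<in> V" and bV: "b \<in> V" and nc: "\<not> conn F a b"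
  shows "gamma V (insert {a,b} F) * card (cls V F a) * card (cls V F b)
       = gamma V F * (card (cls V F a) + card (cls V F b))"
proof -
  define Ca where "Ca = cls V F a"
  define Cb where "Cb = cls V F b"
  define R where "R = cls V F ` V - {Ca, Cb}"
  have ab: "Ca \<noteq> Cb" using nc cls_mem[OF bV, of F] unfolding Ca_def Cb_def
    by (auto dest: cls_memD)
  have CaI: "Ca \<in> cls V F ` V" "Cb \<in> cls V F ` V" using aV bV by (auto simp: Ca_def Cb_def)
  have notR: "Ca \<union> Cb \<notin> R"
  proof
    assume "Ca \<union> Cb \<in> R"
    then obtain v where v: "v \<in> V" "cls V F v = Ca \<union> Cb" "cls V F v \<noteq> Ca" unfolding R_def by auto
    then have "a \<in> cls V F v" using cls_mem[OF aV] unfolding Ca_def by auto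
    then have "cls V F v = Ca" unfolding Ca_def by (metis cls_eq cls_memD)
    then show False using v by blast
  qed
  have new: "cls V (insert {a,b} F) ` V = insert (Ca \<union> Cb) R"
  proof (intro equalityI subsetI)
    fix C assume "C \<in> cls V (insert {a,b} F) ` V"
    then obtain v where v: "v \<in> V" "C = cls V (insert {a,b} F) v" by auto
    show "C \<in> insert (Ca \<union> Cb) R"
    proof (cases "conn F v a \<or> conn F v b")
      case True then show ?thesis using v cls_insert[OF nc, of V v] by (simp add: Ca_def Cb_def)
    next
      case False
      then have "C = cls V F v" using v cls_insert[OF nc, of V v] by simp
      moreover have "cls V F v \<noteq> Ca" "cls V F v \<noteq> Cb"
        using False cls_mem[OF aV, of F] cls_mem[OF bV, of F] unfolding Ca_def Cb_def
        by (metis cls_memD conn_sym)+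
      ultimately show ?thesis using v unfolding R_def by auto
    qed
  next
    fix C assume C: "C \<in> insert (Ca \<union> Cb) R"
    show "C \<in> cls V (insert {a,b} F) ` V"
    proof (cases "C = Ca \<union> Cb")
      case True then show ?thesis using aV cls_insert_a[OF nc, of V] by (auto simp: Ca_def Cb_def)
    next
      case False
      then obtain v where v: "v \<in> V" "C = cls V F v" "C \<noteq> Ca" "C \<noteq> Cb" using C unfolding R_def by auto
      then have "\<not> conn F v a" "\<not> conn F v b" unfolding Ca_def Cb_def using cls_eq by metis+
      then have "cls V (insert {a,b} F) v = C" using v cls_insert[OF nc, of V v] by simp
      then show ?thesis using v by force
    qed
  qed
  have finR: "finite R" using fin unfolding R_def by simp
  have old: "cls V F ` V = insert Ca (insert Cb R)" using CaI unfolding R_def by auto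
  have g1: "gamma V (insert {a,b} F) = card (Ca \<union> Cb) * (\<Prod>C\<in>R. card C)"
    unfolding gamma_cls new using finR notR by simp
  have g0: "gamma V F = card Ca * card Cb * (\<Prod>C\<in>R. card C)"
    unfolding gamma_cls old using finR ab by (simp add: R_def)
  have cu: "card (Ca \<union> Cb) = card Ca + card Cb"
    using card_cls_insert_a[OF fin nc] cls_insert_a[OF nc] unfolding Ca_def Cb_def by simp
  show ?thesis unfolding g1 g0 cu Ca_def[symmetric] Cb_def[symmetric] by (simp add: algebra_simps)
qed

lemma star_empty[simp]: "star_edges z {} = {}"
  by (simp add: star_edges_def)

lemma star_insert: "star_edges z (insert c S) = insert {z,c} (star_edges z S)"
  by (auto simp: star_edges_def)

lemma star_Un: "star_edges z (A \<union> B) = star_edges z A \<union> star_edges z B"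
  by (auto simp: star_edges_def)

lemma mem_star: "e \<in> star_edges z S \<longleftrightarrow> (\<exists>v\<in>S. e = {z,v})"
  by (auto simp: star_edges_def)

lemma mem_star2[simp]: "{z,a} \<in> star_edges z S \<longleftrightarrow> a \<in> S"
  by (auto simp: star_edges_def doubleton_eq_iff)

lemma finite_star[simp]: "finite S \<Longrightarrow> finite (star_edges z S)"
  by (simp add: star_edges_def)

lemma card_star: "finite S \<Longrightarrow> card (star_edges z S) = card S"
proof (induction S rule: finite_induct)
  case empty then show ?case by simp
next
  case (insert c S) then show ?case by (simp add: star_insert)
qed

definition Rz :: "'a set set \<Rightarrow> 'a \<Rightarrow> 'a set \<Rightarrow> 'a \<Rightarrow> bool" where
  "Rz T z U u \<longleftrightarrow> conn T u z \<or> (\<exists>a\<in>U. conn T u a)"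

definition good :: "'a set set \<Rightarrow> 'a \<Rightarrow> 'a set \<Rightarrow> bool" where
  "good T z U \<longleftrightarrow> z \<notin> U \<and> (\<forall>a\<in>U. {z,a} \<notin> T) \<and> (\<forall>a\<in>U. \<not> conn T z a)
     \<and> (\<forall>a\<in>U. \<forall>b\<in>U. a \<noteq> b \<longrightarrow> \<not> conn T a b)"

lemma good_mono: "good T z (insert c U) \<Longrightarrow> good T z U"
  unfolding good_def by blast

lemma star_add:
  assumes "finite U"
  shows "acyclic_edges T \<Longrightarrow> good T z U \<Longrightarrow> acyclic_edges (T \<union> star_edges z U) \<and>
     (\<forall>u v. conn (T \<union> star_edges z U) u v \<longleftrightarrow> conn T u v \<or> (Rz T z U u \<and> Rz T z U v))"
  using assms
proof (induction U rule: finite_induct)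
  case empty
  then show ?case by (simp add: Rz_def) (metis conn_sym conn_trans)
next
  case (insert c U)
  have gU: "good T z U" using insert.prems(2) by (rule good_mono)
  from insert.IH[OF insert.prems(1) gU] have
    ac1: "acyclic_edges (T \<union> star_edges z U)" and
    ch1: "\<And>u v. conn (T \<union> star_edges z U) u v \<longleftrightarrow> conn T u v \<or> (Rz T z U u \<and> Rz T z U v)"
    by blast+
  define T1 where "T1 = T \<union> star_edges z U"
  have g: "z \<noteq> c" "{z,c} \<notin> T" "\<not> conn T z c" "\<And>a. a \<in> U \<Longrightarrow> \<not> conn T c a"
    using insert.prems(2) insert.hyps(2) unfolding good_def by auto
  have Rzz: "Rz T z U z" by (simp add: Rz_def)
  have Rc: "\<not> Rz T z U c" using g(3,4) unfolding Rz_def by (metis conn_sym)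
  have zc1: "{z,c} \<notin> T1" using g insert.hyps(2) unfolding T1_def by simp
  have nc1: "\<not> conn T1 z c" unfolding T1_def ch1 using g Rc by blast
  have eq: "T \<union> star_edges z (insert c U) = insert {z,c} T1"
    unfolding T1_def star_insert by blast
  have ac: "acyclic_edges (insert {z,c} T1)"
    using acyclic_insert[OF g(1) zc1] ac1 nc1 unfolding T1_def by blast
  have t1: "conn T1 u z \<longleftrightarrow> Rz T z U u" for u
    unfolding T1_def ch1 using Rzz unfolding Rz_def by blast
  have t2: "conn T1 c v \<longleftrightarrow> conn T c v" for v
    unfolding T1_def ch1 using Rc by blast
  have t3: "conn T1 u c \<longleftrightarrow> conn T u c" for u
    unfolding T1_def ch1 using Rc by blast
  have t4: "conn T1 z v \<longleftrightarrow> Rz T z U v" for v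
    unfolding T1_def ch1 using Rzz unfolding Rz_def by (metis conn_sym)
  have R': "Rz T z (insert c U) u \<longleftrightarrow> Rz T z U u \<or> conn T u c" for u
    unfolding Rz_def by blast
  have ch: "conn (insert {z,c} T1) u v \<longleftrightarrow> conn T u v \<or> (Rz T z (insert c U) u \<and> Rz T z (insert c U) v)" for u v
  proof -
    have "conn (insert {z,c} T1) u v \<longleftrightarrow>
       (conn T u v \<or> (Rz T z U u \<and> Rz T z U v)) \<or> (Rz T z U u \<and> conn T c v) \<or> (conn T u c \<and> Rz T z U v)"
      unfolding conn_insert t1 t2 t3 t4 unfolding T1_def ch1 by blast
    also have "\<dots> \<longleftrightarrow> conn T u v \<or> ((Rz T z U u \<or> conn T u c) \<and> (Rz T z U v \<or> conn T v c))"
    proof -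
      have s: "conn T c v \<longleftrightarrow> conn T v c" by (metis conn_sym)
      have t: "conn T u c \<Longrightarrow> conn T v c \<Longrightarrow> conn T u v" by (metis conn_sym conn_trans)
      show ?thesis unfolding s using t by blast
    qed
    finally show ?thesis unfolding R' .
  qed
  show ?case unfolding eq using ac ch by blast
qed

lemma star_gamma:
  assumes "finite U"
  shows "finite V \<Longrightarrow> z \<in> V \<Longrightarrow> U \<subseteq> V \<Longrightarrow> acyclic_edges T \<Longrightarrow> good T z U \<Longrightarrow>
    gamma V (T \<union> star_edges z U) * (\<Prod>a\<in>U. card (cls V T a)) * card (cls V T z)
      = gamma V T * (card (cls V T z) + (\<Sum>a\<in>U. card (cls V T a))) \<and>
    card (cls V (T \<union> star_edges z U) z) = card (cls V T z) + (\<Sum>a\<in>U. card (cls V T a))"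
  using assms
proof (induction U rule: finite_induct)
  case empty
  then show ?case by simp
next
  case (insert c U)
  have gU: "good T z U" using insert.prems(5) by (rule good_mono)
  have UV: "U \<subseteq> V" "c \<in> V" using insert.prems(3) by auto
  from insert.IH[OF insert.prems(1,2) UV(1) insert.prems(4) gU] have
    IH1: "gamma V (T \<union> star_edges z U) * (\<Prod>a\<in>U. card (cls V T a)) * card (cls V T z)
      = gamma V T * (card (cls V T z) + (\<Sum>a\<in>U. card (cls V T a)))" and
    IH2: "card (cls V (T \<union> star_edges z U) z) = card (cls V T z) + (\<Sum>a\<in>U. card (cls V T a))"
    by blast+
  from star_add[OF insert.hyps(1) insert.prems(4) gU] have
    ch1: "\<And>u v. conn (T \<union> star_edges z U) u v \<longleftrightarrow> conn T u v \<or> (Rz T z U u \<and> Rz T z U v)"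
    by blast
  define T1 where "T1 = T \<union> star_edges z U"
  have g: "z \<noteq> c" "{z,c} \<notin> T" "\<not> conn T z c" "\<And>a. a \<in> U \<Longrightarrow> \<not> conn T c a"
    using insert.prems(5) insert.hyps(2) unfolding good_def by auto
  have Rc: "\<not> Rz T z U c" using g(3,4) unfolding Rz_def by (metis conn_sym)
  have nc1: "\<not> conn T1 z c" unfolding T1_def ch1 using g Rc by blast
  have clsc: "cls V T1 c = cls V T c"
    unfolding cls_def T1_def ch1 using Rc by blast
  have eq: "T \<union> star_edges z (insert c U) = insert {z,c} T1"
    unfolding T1_def star_insert by blast
  define P where "P = (\<Prod>a\<in>U. card (cls V T a))"
  define S where "S = (\<Sum>a\<in>U. card (cls V T a))"
  define wz where "wz = card (cls V T z)"
  define wc where "wc = card (cls V T c)"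
  have gi: "gamma V (insert {z,c} T1) * (wz + S) * wc = gamma V T1 * ((wz + S) + wc)"
    using gamma_insert[OF insert.prems(1,2) UV(2) nc1] IH2 clsc
    unfolding T1_def[symmetric] wz_def S_def wc_def by simp
  have IH1': "gamma V T1 * P * wz = gamma V T * (wz + S)"
    using IH1 unfolding T1_def P_def wz_def S_def .
  have pos: "wz + S > 0" using cls_mem[OF insert.prems(2), of T] insert.prems(1)
    unfolding wz_def cls_def by (auto simp: card_gt_0_iff)
  have "gamma V (insert {z,c} T1) * (P * wc) * wz * (wz + S) = gamma V T * (wz + S + wc) * (wz + S)"
  proof -
    have "gamma V (insert {z,c} T1) * (P * wc) * wz * (wz + S) = (gamma V (insert {z,c} T1) * (wz + S) * wc) * P * wz"
      by (simp add: algebra_simps)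
    also have "\<dots> = gamma V T1 * P * wz * ((wz + S) + wc)" unfolding gi by (simp add: algebra_simps)
    also have "\<dots> = gamma V T * (wz + S + wc) * (wz + S)" unfolding IH1' by (simp add: algebra_simps)
    finally show ?thesis .
  qed
  then have A: "gamma V (insert {z,c} T1) * (P * wc) * wz = gamma V T * (wz + S + wc)"
    using pos by (metis mult_right_cancel not_gr0)
  have B: "card (cls V (insert {z,c} T1) z) = wz + S + wc"
    using card_cls_insert_a[OF insert.prems(1) nc1] IH2 clsc
    unfolding T1_def[symmetric] wz_def S_def wc_def by simp
  have PS: "(\<Prod>a\<in>insert c U. card (cls V T a)) = wc * P" "(\<Sum>a\<in>insert c U. card (cls V T a)) = wc + S"
    using insert.hyps unfolding P_def S_def wc_def by auto
  show ?case unfolding eq PS using A B unfolding wz_def[symmetric] by (simp add: algebra_simps)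
qed

definition fv :: "'a set \<Rightarrow> 'a set set \<Rightarrow> nat" where
  "fv V F = (if acyclic_edges F then gamma V F else 0)"

lemma gamma_cong: "(\<And>u v. conn F1 u v \<longleftrightarrow> conn F2 u v) \<Longrightarrow> gamma V F1 = gamma V F2"
proof -
  assume "\<And>u v. conn F1 u v \<longleftrightarrow> conn F2 u v"
  then have "connected_in F1 = connected_in F2" by (intro ext) blast
  then show ?thesis unfolding gamma_def components_def by simp
qed

lemma swap1:
  assumes "conn F p q" "p \<noteq> c" "q \<noteq> c" "{p,c} \<notin> F" "{q,c} \<notin> F"
  shows "fv V (insert {p,c} F) = fv V (insert {q,c} F)"
proof -
  have s: "conn F u p \<longleftrightarrow> conn F u q" "conn F p v \<longleftrightarrow> conn F q v" for u v
    using assms(1) by (metis conn_sym conn_trans)+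
  have c: "conn (insert {p,c} F) u v \<longleftrightarrow> conn (insert {q,c} F) u v" for u v
    unfolding conn_insert s by (rule refl)
  have a: "acyclic_edges (insert {p,c} F) \<longleftrightarrow> acyclic_edges (insert {q,c} F)"
    unfolding acyclic_insert[OF assms(2,4)] acyclic_insert[OF assms(3,5)] s(2)[of c] by (rule refl)
  show ?thesis unfolding fv_def a gamma_cong[OF c, of V] by (rule refl)
qed

lemma swap_star:
  assumes "finite R" "conn F0 p q" "p \<noteq> q"
  shows "S \<inter> R = {} \<Longrightarrow> p \<notin> S \<union> R \<Longrightarrow> q \<notin> S \<union> R \<Longrightarrow>
    (\<forall>a\<in>S \<union> R. {p,a} \<notin> F0 \<and> {q,a} \<notin> F0) \<Longrightarrow>
    fv V (F0 \<union> star_edges p S \<union> star_edges q R) = fv V (F0 \<union> star_edges p (S \<union> R))"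
  using assms(1)
proof (induction R arbitrary: S rule: finite_induct)
  case empty then show ?case by simp
next
  case (insert c R)
  define F1 where "F1 = F0 \<union> star_edges p S \<union> star_edges q R"
  have cS: "c \<notin> S" using insert.prems(1) by auto
  have conn1: "conn F1 p q" using assms(2) by (rule conn_mono[rotated]) (auto simp: F1_def)
  have pc: "{p,c} \<notin> F1"
  proof
    assume "{p,c} \<in> F1"
    moreover have "{p,c} \<notin> F0" using insert.prems(4) by auto
    moreover have "{p,c} \<notin> star_edges p S" using cS by simp
    moreover have "{p,c} \<notin> star_edges q R"
      using insert.prems(2) assms(3) by (auto simp: mem_star doubleton_eq_iff)
    ultimately show False unfolding F1_def by blast
  qed
  have qc: "{q,c} \<notin> F1"
  proof
    assume "{q,c} \<in> F1"
    moreover have "{q,c} \<notin> F0" using insert.prems(4) by auto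
    moreover have "{q,c} \<notin> star_edges q R" using insert.hyps(2) by simp
    moreover have "{q,c} \<notin> star_edges p S"
      using insert.prems(3) assms(3) by (auto simp: mem_star doubleton_eq_iff)
    ultimately show False unfolding F1_def by blast
  qed
  have ne: "p \<noteq> c" "q \<noteq> c" using insert.prems(2,3) by auto
  have e1: "F0 \<union> star_edges p S \<union> star_edges q (insert c R) = insert {q,c} F1"
    unfolding F1_def star_insert by blast
  have e2: "F0 \<union> star_edges p (insert c S) \<union> star_edges q R = insert {p,c} F1"
    unfolding F1_def star_insert by blast
  have IH: "fv V (F0 \<union> star_edges p (insert c S) \<union> star_edges q R) = fv V (F0 \<union> star_edges p (insert c S \<union> R))"
    apply (rule insert.IH)
    using insert.prems insert.hyps(2) by auto
  show ?case
    unfolding e1 swap1[OF conn1 ne pc qc, symmetric] e2[symmetric] IH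
    by (simp add: insert_commute)
qed

lemma not_acyclic_two:
  assumes "a \<noteq> b" "a \<in> U" "b \<in> U" "conn T a b" "z \<notin> U" "{z,a} \<notin> T" "{z,b} \<notin> T"
    "T \<union> star_edges z U \<subseteq> F'"
  shows "\<not> acyclic_edges F'"
proof (rule not_acyclic_conn)
  show "{z,b} \<in> F'" using assms(3,8) by auto
  show "insert {z,a} T \<subseteq> F' - {{z,b}}" using assms by (auto simp: doubleton_eq_iff)
  have "conn (insert {z,a} T) z a" by (rule conn_edge) simp
  moreover have "conn (insert {z,a} T) a b" using assms(4) by (rule conn_mono[rotated]) auto
  ultimately show "conn (insert {z,a} T) z b" by (rule conn_trans)
qed

lemma not_acyclic_one:
  assumes "a \<in> U" "conn T z a" "{z,a} \<notin> T" "T \<union> star_edges z U \<subseteq> F'"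
  shows "\<not> acyclic_edges F'"
  by (rule not_acyclic_conn[of z a F' T]) (use assms in auto)

lemma caseb:
  assumes fin: "finite V" and "A \<subseteq> V" "B \<subseteq> V" "A \<inter> B = {}" "x \<noteq> y"
    "x \<notin> A \<union> B" "y \<notin> A \<union> B" "\<forall>a\<in>A \<union> B. {x,a} \<notin> T \<and> {y,a} \<notin> T"
    "a \<in> A" "conn T y a"
  shows "fv V (T \<union> star_edges x A \<union> star_edges y B) = fv V (T \<union> star_edges x (A \<union> B) \<union> star_edges y {})"
proof -
  define F0 where "F0 = insert {x,a} T"
  have c: "conn F0 x y"
  proof -
    have "conn F0 x a" unfolding F0_def by (rule conn_edge) simp
    moreover have "conn F0 a y" using assms(10) unfolding F0_def by (metis conn_sym conn_mono subset_insertI)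
    ultimately show ?thesis by (rule conn_trans)
  qed
  have finB: "finite B" using assms(3) fin by (rule finite_subset)
  have "fv V (F0 \<union> star_edges x (A - {a}) \<union> star_edges y B) = fv V (F0 \<union> star_edges x ((A - {a}) \<union> B))"
    apply (rule swap_star[OF finB c assms(5)])
    using assms by (auto simp: F0_def doubleton_eq_iff)
  moreover have "F0 \<union> star_edges x (A - {a}) = T \<union> star_edges x A"
    using assms(9) unfolding F0_def by (metis Un_insert_left Un_insert_right insert_Diff star_insert)
  moreover have "F0 \<union> star_edges x ((A - {a}) \<union> B) = T \<union> star_edges x (A \<union> B)"
  proof -
    have "A \<union> B = insert a ((A - {a}) \<union> B)" using assms(9) by auto
    then show ?thesis unfolding F0_def by (simp add: star_insert)
  qed
  ultimately show ?thesis by simp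
qed

lemma two_star:
  assumes fin: "finite V" and xV: "x \<in> V" and yV: "y \<in> V" and xy: "x \<noteq> y"
    and SV: "S \<subseteq> V" and RV: "R \<subseteq> V" and SR: "S \<inter> R = {}"
    and xn: "x \<notin> S \<union> R" and yn: "y \<notin> S \<union> R"
    and ne: "\<forall>a\<in>S \<union> R. {x,a} \<notin> T \<and> {y,a} \<notin> T"
    and ac: "acyclic_edges T" and nxy: "\<not> conn T x y"
    and nxa: "\<forall>a\<in>S \<union> R. \<not> conn T x a \<and> \<not> conn T y a"
    and nab: "\<forall>a\<in>S \<union> R. \<forall>b\<in>S \<union> R. a \<noteq> b \<longrightarrow> \<not> conn T a b"
  shows "acyclic_edges (T \<union> star_edges x S \<union> star_edges y R) \<and>
    gamma V (T \<union> star_edges x S \<union> star_edges y R) *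
      ((\<Prod>a\<in>S. card (cls V T a)) * (\<Prod>a\<in>R. card (cls V T a)) * card (cls V T x) * card (cls V T y))
    = gamma V T * (card (cls V T x) + (\<Sum>a\<in>S. card (cls V T a))) * (card (cls V T y) + (\<Sum>a\<in>R. card (cls V T a)))"
proof -
  have finS: "finite S" using SV fin by (rule finite_subset)
  have finR: "finite R" using RV fin by (rule finite_subset)
  have gS: "good T x S" unfolding good_def using xn ne nxa nab by auto
  from star_add[OF finS ac gS] have ac1: "acyclic_edges (T \<union> star_edges x S)"
    and ch1: "\<And>u v. conn (T \<union> star_edges x S) u v \<longleftrightarrow> conn T u v \<or> (Rz T x S u \<and> Rz T x S v)" by blast+
  from star_gamma[OF finS fin xV SV ac gS] have
    g1: "gamma V (T \<union> star_edges x S) * (\<Prod>a\<in>S. card (cls V T a)) * card (cls V T x)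
      = gamma V T * (card (cls V T x) + (\<Sum>a\<in>S. card (cls V T a)))" by blast
  define T1 where "T1 = T \<union> star_edges x S"
  have nR: "\<not> Rz T x S v" if "v = y \<or> v \<in> R" for v
  proof -
    have "\<not> conn T v x"
    proof
      assume "conn T v x" then have "conn T x v" by (rule conn_sym)
      then show False using that nxy nxa by auto
    qed
    moreover have "\<not> conn T v a" if "a \<in> S" for a
    proof -
      have "a \<noteq> v" using that \<open>v = y \<or> v \<in> R\<close> SR yn by auto
      then show ?thesis using that \<open>v = y \<or> v \<in> R\<close> nxa nab by (metis UnI1 UnI2 conn_sym)
    qed
    ultimately show ?thesis unfolding Rz_def by blast
  qed
  have clsT1: "cls V T1 v = cls V T v" if "v = y \<or> v \<in> R" for v
    unfolding cls_def T1_def ch1 using nR[OF that] by blast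
  have gR: "good T1 y R"
    unfolding good_def
  proof (intro conjI ballI impI)
    show "y \<notin> R" using yn by auto
  next
    fix a assume a: "a \<in> R"
    have "{y,a} \<notin> T" using ne a by auto
    moreover have "{y,a} \<notin> star_edges x S" using xy yn by (auto simp: mem_star doubleton_eq_iff)
    ultimately show "{y,a} \<notin> T1" unfolding T1_def by blast
  next
    fix a assume a: "a \<in> R"
    show "\<not> conn T1 y a" unfolding T1_def ch1 using nR[of y] nxa a by blast
  next
    fix a b assume a: "a \<in> R" and b: "b \<in> R" and ab: "a \<noteq> b"
    show "\<not> conn T1 a b" unfolding T1_def ch1 using nR[of a] nab a b ab by blast
  qed
  have ac1': "acyclic_edges T1" using ac1 unfolding T1_def .
  from star_add[OF finR ac1' gR] have ac2: "acyclic_edges (T1 \<union> star_edges y R)" by blast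
  from star_gamma[OF finR fin yV RV ac1' gR] have
    g2: "gamma V (T1 \<union> star_edges y R) * (\<Prod>a\<in>R. card (cls V T1 a)) * card (cls V T1 y)
      = gamma V T1 * (card (cls V T1 y) + (\<Sum>a\<in>R. card (cls V T1 a)))" by blast
  have pR: "(\<Prod>a\<in>R. card (cls V T1 a)) = (\<Prod>a\<in>R. card (cls V T a))"
    by (rule prod.cong) (auto simp: clsT1)
  have sR: "(\<Sum>a\<in>R. card (cls V T1 a)) = (\<Sum>a\<in>R. card (cls V T a))"
    by (rule sum.cong) (auto simp: clsT1)
  have g2': "gamma V (T1 \<union> star_edges y R) * (\<Prod>a\<in>R. card (cls V T a)) * card (cls V T y)
      = gamma V T1 * (card (cls V T y) + (\<Sum>a\<in>R. card (cls V T a)))"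
    using g2 unfolding pR sR clsT1[of y, simplified] .
  have eq: "T \<union> star_edges x S \<union> star_edges y R = T1 \<union> star_edges y R" unfolding T1_def ..
  have "gamma V (T1 \<union> star_edges y R) *
      ((\<Prod>a\<in>S. card (cls V T a)) * (\<Prod>a\<in>R. card (cls V T a)) * card (cls V T x) * card (cls V T y))
    = (gamma V (T1 \<union> star_edges y R) * (\<Prod>a\<in>R. card (cls V T a)) * card (cls V T y)) *
      (\<Prod>a\<in>S. card (cls V T a)) * card (cls V T x)" by (simp add: algebra_simps)
  also have "\<dots> = (gamma V T1 * (\<Prod>a\<in>S. card (cls V T a)) * card (cls V T x)) *
      (card (cls V T y) + (\<Sum>a\<in>R. card (cls V T a)))" unfolding g2' by (simp add: algebra_simps)
  also have "\<dots> = gamma V T * (card (cls V T x) + (\<Sum>a\<in>S. card (cls V T a))) * (card (cls V T y) + (\<Sum>a\<in>R. card (cls V T a)))"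
    using g1 unfolding T1_def by simp
  finally show ?thesis unfolding eq using ac2 by blast
qed

lemma card_cls_pos: "finite V \<Longrightarrow> v \<in> V \<Longrightarrow> card (cls V T v) > 0"
  unfolding cls_def by (subst card_gt_0_iff) auto

lemma key:
  assumes fin: "finite V" and xV: "x \<in> V" and yV: "y \<in> V" and xy: "x \<noteq> y"
    and U1V: "U1 \<subseteq> V" and U2V: "U2 \<subseteq> V" and dis: "U1 \<inter> U2 = {}"
    and xn: "x \<notin> U1 \<union> U2" and yn: "y \<notin> U1 \<union> U2"
    and ne: "\<forall>a\<in>U1 \<union> U2. {x,a} \<notin> T \<and> {y,a} \<notin> T"
  shows "fv V (T \<union> star_edges x {} \<union> star_edges y (U1 \<union> U2)) + fv V (T \<union> star_edges x (U1 \<union> U2) \<union> star_edges y {})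
    \<le> fv V (T \<union> star_edges x U1 \<union> star_edges y U2) + fv V (T \<union> star_edges x U2 \<union> star_edges y U1)"
proof -
  define U where "U = U1 \<union> U2"
  have UV: "U \<subseteq> V" using U1V U2V unfolding U_def by blast
  have finU: "finite U" using UV fin by (rule finite_subset)
  have ne': "\<forall>a\<in>U2 \<union> U1. {x,a} \<notin> T \<and> {y,a} \<notin> T" using ne by blast
  have dis': "U2 \<inter> U1 = {}" using dis by blast
  have xn': "x \<notin> U2 \<union> U1" "y \<notin> U2 \<union> U1" using xn yn by auto
  show ?thesis
  proof (cases "acyclic_edges T")
    case False
    have "\<not> acyclic_edges (T \<union> A \<union> B)" for A B
    proof
      assume "acyclic_edges (T \<union> A \<union> B)"
      then have "acyclic_edges T" by (rule acyclic_mono[rotated]) blast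
      with False show False by simp
    qed
    then have z: "fv V (T \<union> A \<union> B) = 0" for A B unfolding fv_def by simp
    show ?thesis by (simp only: z)
  next
    case acT: True
    show ?thesis
    proof (cases "conn T x y")
      case True
      have sw: "fv V (T \<union> star_edges x A \<union> star_edges y B) = fv V (T \<union> star_edges x (A \<union> B))"
        if "A \<subseteq> U" "B \<subseteq> U" "A \<inter> B = {}" for A B
        apply (rule swap_star[OF _ True xy])
        using that fin UV xn yn ne finite_subset[OF _ finU] unfolding U_def by auto
      have "fv V (T \<union> star_edges x {} \<union> star_edges y U) = fv V (T \<union> star_edges x U)"
        using sw[of "{}" U] by simp
      moreover have "fv V (T \<union> star_edges x U \<union> star_edges y {}) = fv V (T \<union> star_edges x U)"
        by simp
      moreover have "fv V (T \<union> star_edges x U1 \<union> star_edges y U2) = fv V (T \<union> star_edges x U)"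
        using sw[of U1 U2] dis unfolding U_def by auto
      moreover have "fv V (T \<union> star_edges x U2 \<union> star_edges y U1) = fv V (T \<union> star_edges x U)"
        using sw[of U2 U1] dis unfolding U_def by (auto simp: Un_commute)
      ultimately show ?thesis unfolding U_def[symmetric] by simp
    next
      case nxy: False
      show ?thesis
      proof (cases "\<exists>a\<in>U. conn T y a")
        case True
        then obtain a where a: "a \<in> U" "conn T y a" by blast
        have z: "fv V (T \<union> star_edges x {} \<union> star_edges y U) = 0"
          unfolding fv_def using not_acyclic_one[OF a(1,2)] ne a(1) unfolding U_def by auto
        have "fv V (T \<union> star_edges x U \<union> star_edges y {}) \<le>
          fv V (T \<union> star_edges x U1 \<union> star_edges y U2) + fv V (T \<union> star_edges x U2 \<union> star_edges y U1)"
        proof (cases "a \<in> U1")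
          case True
          have "fv V (T \<union> star_edges x U1 \<union> star_edges y U2) = fv V (T \<union> star_edges x U \<union> star_edges y {})"
            using caseb[OF fin U1V U2V dis xy xn yn ne True a(2)] unfolding U_def .
          then show ?thesis by simp
        next
          case False
          then have a2: "a \<in> U2" using a(1) unfolding U_def by blast
          have "fv V (T \<union> star_edges x U2 \<union> star_edges y U1) = fv V (T \<union> star_edges x U \<union> star_edges y {})"
            using caseb[OF fin U2V U1V dis' xy xn'(1) xn'(2) ne' a2 a(2)] unfolding U_def by (simp add: Un_commute)
          then show ?thesis by simp
        qed
        then show ?thesis unfolding U_def[symmetric] z by simp
      next
        case nya: False
        show ?thesis
        proof (cases "\<exists>a\<in>U. conn T x a")
          case True
          then obtain a where a: "a \<in> U" "conn T x a" by blast
          have z: "fv V (T \<union> star_edges x U \<union> star_edges y {}) = 0"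
            unfolding fv_def using not_acyclic_one[OF a(1,2)] ne a(1) unfolding U_def by auto
          have "fv V (T \<union> star_edges x {} \<union> star_edges y U) \<le>
            fv V (T \<union> star_edges x U1 \<union> star_edges y U2) + fv V (T \<union> star_edges x U2 \<union> star_edges y U1)"
          proof (cases "a \<in> U1")
            case True
            have yx: "y \<noteq> x" using xy by blast
            have ne2: "\<forall>b\<in>U1 \<union> U2. {y,b} \<notin> T \<and> {x,b} \<notin> T" using ne by blast
            have "fv V (T \<union> star_edges y U1 \<union> star_edges x U2) = fv V (T \<union> star_edges y (U1 \<union> U2) \<union> star_edges x {})"
              using caseb[OF fin U1V U2V dis yx yn xn ne2 True a(2)] .
            then have "fv V (T \<union> star_edges x U2 \<union> star_edges y U1) = fv V (T \<union> star_edges x {} \<union> star_edges y U)"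
              unfolding U_def by (simp add: Un_ac)
            then show ?thesis by simp
          next
            case False
            then have a2: "a \<in> U2" using a(1) unfolding U_def by blast
            have yx: "y \<noteq> x" using xy by blast
            have ne2: "\<forall>b\<in>U2 \<union> U1. {y,b} \<notin> T \<and> {x,b} \<notin> T" using ne by blast
            have "fv V (T \<union> star_edges y U2 \<union> star_edges x U1) = fv V (T \<union> star_edges y (U2 \<union> U1) \<union> star_edges x {})"
              using caseb[OF fin U2V U1V dis' yx xn'(2) xn'(1) ne2 a2 a(2)] .
            then have "fv V (T \<union> star_edges x U1 \<union> star_edges y U2) = fv V (T \<union> star_edges x {} \<union> star_edges y U)"
              unfolding U_def by (simp add: Un_ac)
            then show ?thesis by simp
          qed
          then show ?thesis unfolding U_def[symmetric] z by simp
        next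
          case nxa: False
          show ?thesis
          proof (cases "\<exists>a\<in>U. \<exists>b\<in>U. a \<noteq> b \<and> conn T a b")
            case True
            then obtain a b where ab: "a \<in> U" "b \<in> U" "a \<noteq> b" "conn T a b" by blast
            have "fv V (T \<union> star_edges x {} \<union> star_edges y U) = 0"
              unfolding fv_def using not_acyclic_two[OF ab(3,1,2,4)] ne ab yn unfolding U_def by auto
            moreover have "fv V (T \<union> star_edges x U \<union> star_edges y {}) = 0"
              unfolding fv_def using not_acyclic_two[OF ab(3,1,2,4)] ne ab xn unfolding U_def by auto
            ultimately show ?thesis unfolding U_def[symmetric] by simp
          next
            case nab: False
            define w where "w = (\<lambda>v. card (cls V T v))"
            define P1 where "P1 = (\<Prod>a\<in>U1. w a)"
            define P2 where "P2 = (\<Prod>a\<in>U2. w a)"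
            define s1 where "s1 = (\<Sum>a\<in>U1. w a)"
            define s2 where "s2 = (\<Sum>a\<in>U2. w a)"
            have finU1: "finite U1" "finite U2" using U1V U2V fin finite_subset by auto
            have PU: "(\<Prod>a\<in>U. w a) = P1 * P2" "(\<Sum>a\<in>U. w a) = s1 + s2"
              unfolding U_def P1_def P2_def s1_def s2_def using finU1 dis
              by (simp_all add: prod.union_disjoint sum.union_disjoint)
            have nxa': "\<forall>a\<in>A \<union> B. \<not> conn T x a \<and> \<not> conn T y a" if "A \<union> B = U" for A B
              using that nxa nya by blast
            have nab': "\<forall>a\<in>A \<union> B. \<forall>b\<in>A \<union> B. a \<noteq> b \<longrightarrow> \<not> conn T a b" if "A \<union> B = U" for A B
              using that nab by blast
            note ts = two_star[OF fin xV yV xy _ _ _ _ _ _ acT nxy nxa' nab', unfolded w_def[symmetric]]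
            have t1: "fv V (T \<union> star_edges x U1 \<union> star_edges y U2) * (P1 * P2 * w x * w y)
                 = gamma V T * (w x + s1) * (w y + s2)"
              using ts[of U1 U2] U1V U2V dis xn yn ne unfolding fv_def U_def P1_def P2_def s1_def s2_def by (auto simp: w_def)
            have t2: "fv V (T \<union> star_edges x U2 \<union> star_edges y U1) * (P1 * P2 * w x * w y)
                 = gamma V T * (w x + s2) * (w y + s1)"
              using ts[of U2 U1] U1V U2V dis xn yn ne unfolding fv_def U_def P1_def P2_def s1_def s2_def
              by (auto simp: w_def Un_commute Int_commute mult.commute)
            have t3: "fv V (T \<union> star_edges x {} \<union> star_edges y U) * (P1 * P2 * w x * w y)
                 = gamma V T * (w x) * (w y + (s1 + s2))"
              using ts[of "{}" U] UV xn yn ne PU unfolding fv_def U_def by (auto simp: w_def)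
            have t4: "fv V (T \<union> star_edges x U \<union> star_edges y {}) * (P1 * P2 * w x * w y)
                 = gamma V T * (w x + (s1 + s2)) * (w y)"
              using ts[of U "{}"] UV xn yn ne PU unfolding fv_def U_def by (auto simp: w_def)
            have Mpos: "P1 * P2 * w x * w y > 0"
            proof -
              have "\<forall>a\<in>U1. 0 < w a" "\<forall>a\<in>U2. 0 < w a" "0 < w x" "0 < w y"
                using U1V U2V xV yV card_cls_pos[OF fin] unfolding w_def by blast+
              then have "0 < P1" "0 < P2" "0 < w x" "0 < w y" unfolding P1_def P2_def
                by (simp_all add: prod_pos)
              then show ?thesis by simp
            qed
            have "(fv V (T \<union> star_edges x {} \<union> star_edges y U) + fv V (T \<union> star_edges x U \<union> star_edges y {})) * (P1 * P2 * w x * w y)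
              \<le> (fv V (T \<union> star_edges x U1 \<union> star_edges y U2) + fv V (T \<union> star_edges x U2 \<union> star_edges y U1)) * (P1 * P2 * w x * w y)"
            proof -
              define G where "G = gamma V T"
              have "G * (w x + s1) * (w y + s2) + G * (w x + s2) * (w y + s1)
                 = G * w x * (w y + (s1 + s2)) + G * (w x + (s1 + s2)) * w y + 2 * G * s1 * s2"
                by (simp add: algebra_simps)
              then show ?thesis unfolding add_mult_distrib t1 t2 t3 t4 G_def[symmetric] by linarith
            qed
            then show ?thesis unfolding U_def[symmetric] using Mpos mult_le_cancel2 by blast
          qed
        qed
      qed
    qed
  qed
qed

definition Dm :: "'a \<Rightarrow> 'a \<Rightarrow> 'a set \<Rightarrow> 'a set \<Rightarrow> 'a set set \<Rightarrow> 'a set \<Rightarrow> 'a set set" where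
  "Dm x y X Y T U = T \<union> star_edges x (U \<inter> X) \<union> star_edges y (U \<inter> Y)"

definition Ps :: "'a set set \<Rightarrow> 'a set \<Rightarrow> nat \<Rightarrow> ('a set set \<times> 'a set) set" where
  "Ps H W s = {(T,U). T \<subseteq> H \<and> U \<subseteq> W \<and> card T + card U = s}"

lemma finite_Ps: "finite H \<Longrightarrow> finite W \<Longrightarrow> finite (Ps H W s)"
proof -
  assume "finite H" "finite W"
  then have "finite (Pow H \<times> Pow W)" by simp
  moreover have "Ps H W s \<subseteq> Pow H \<times> Pow W" by (auto simp: Ps_def)
  ultimately show ?thesis by (rule finite_subset[rotated])
qed

lemma star_subset: "A \<subseteq> B \<Longrightarrow> star_edges z A \<subseteq> star_edges z B"
  by (auto simp: star_edges_def)

lemma decomp: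
  assumes fH: "finite H" and fX: "finite X" and fY: "finite Y" and XY: "X \<inter> Y = {}"
    and d1: "H \<inter> star_edges x X = {}" and d2: "H \<inter> star_edges y Y = {}"
    and d3: "star_edges x X \<inter> star_edges y Y = {}"
  shows "lap_coeff V (H \<union> star_edges x X \<union> star_edges y Y) s
    = (\<Sum>p\<in>Ps H (X \<union> Y) s. fv V (Dm x y X Y (fst p) (snd p)))"
proof -
  define E where "E = H \<union> star_edges x X \<union> star_edges y Y"
  define A where "A = {F. F \<subseteq> E \<and> card F = s}"
  define D where "D = (\<lambda>p. Dm x y X Y (fst p) (snd p))"
  have fE: "finite E" unfolding E_def using fH fX fY by simp
  have fA: "finite A"
  proof -
    have "A \<subseteq> Pow E" unfolding A_def by auto
    then show ?thesis using fE by (meson finite_Pow_iff finite_subset)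
  qed
  have sf: "spanning_forests E s = {F \<in> A. acyclic_edges F}"
    unfolding spanning_forests_def A_def by auto
  have l1: "lap_coeff V E s = (\<Sum>F\<in>A. fv V F)"
    unfolding lap_coeff_def sf sum.inter_filter[OF fA] fv_def by simp
  have cardD: "card (Dm x y X Y T U) = card T + card U" if "T \<subseteq> H" "U \<subseteq> X \<union> Y" for T U
  proof -
    have fT: "finite T" using that(1) fH by (rule finite_subset)
    have fU1: "finite (U \<inter> X)" "finite (U \<inter> Y)" using fX fY by auto
    have s1: "star_edges x (U \<inter> X) \<subseteq> star_edges x X" "star_edges y (U \<inter> Y) \<subseteq> star_edges y Y"
      by (auto intro!: star_subset)
    have "card (T \<union> star_edges x (U \<inter> X) \<union> star_edges y (U \<inter> Y))
        = card (T \<union> star_edges x (U \<inter> X)) + card (star_edges y (U \<inter> Y))"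
      apply (rule card_Un_disjoint)
      using fT fU1 s1 d2 d3 that(1) by auto
    also have "card (T \<union> star_edges x (U \<inter> X)) = card T + card (star_edges x (U \<inter> X))"
      apply (rule card_Un_disjoint)
      using fT fU1 s1 d1 that(1) by auto
    also have "card (U \<inter> X) + card (U \<inter> Y) = card U"
    proof -
      have "U = (U \<inter> X) \<union> (U \<inter> Y)" using that(2) by auto
      then have "card U = card ((U \<inter> X) \<union> (U \<inter> Y))" by simp
      also have "\<dots> = card (U \<inter> X) + card (U \<inter> Y)" using fU1 XY by (intro card_Un_disjoint) auto
      finally show ?thesis by simp
    qed
    moreover note card_star[OF fU1(1), of x] card_star[OF fU1(2), of y]
    ultimately show ?thesis unfolding Dm_def by simp
  qed
  have recX: "{a \<in> X. {x,a} \<in> Dm x y X Y T U - H} = U \<inter> X" if "T \<subseteq> H" for T U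
  proof -
    have "{x,a} \<notin> star_edges y (U \<inter> Y)" if "a \<in> X" for a
    proof
      assume "{x,a} \<in> star_edges y (U \<inter> Y)"
      moreover have "{x,a} \<in> star_edges x X" using that by simp
      ultimately show False using d3 star_subset[of "U \<inter> Y" Y y] by blast
    qed
    then show ?thesis unfolding Dm_def using that d1 by auto
  qed
  have recY: "{a \<in> Y. {y,a} \<in> Dm x y X Y T U - H} = U \<inter> Y" if "T \<subseteq> H" for T U
  proof -
    have "{y,a} \<notin> star_edges x (U \<inter> X)" if "a \<in> Y" for a
    proof
      assume "{y,a} \<in> star_edges x (U \<inter> X)"
      moreover have "{y,a} \<in> star_edges y Y" using that by simp
      ultimately show False using d3 star_subset[of "U \<inter> X" X x] by blast
    qed
    then show ?thesis unfolding Dm_def using that d2 by auto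
  qed
  have recT: "Dm x y X Y T U \<inter> H = T" if "T \<subseteq> H" for T U
  proof -
    have "star_edges x (U \<inter> X) \<inter> H = {}" "star_edges y (U \<inter> Y) \<inter> H = {}"
      using d1 d2 star_subset[of "U \<inter> X" X x] star_subset[of "U \<inter> Y" Y y] by auto
    then show ?thesis unfolding Dm_def using that by auto
  qed
  have inj: "inj_on D (Ps H (X \<union> Y) s)"
  proof (rule inj_onI)
    fix p q assume p: "p \<in> Ps H (X \<union> Y) s" and q: "q \<in> Ps H (X \<union> Y) s" and e: "D p = D q"
    obtain T U where pe: "p = (T,U)" "T \<subseteq> H" "U \<subseteq> X \<union> Y" using p unfolding Ps_def by auto
    obtain T' U' where qe: "q = (T',U')" "T' \<subseteq> H" "U' \<subseteq> X \<union> Y" using q unfolding Ps_def by auto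
    have e': "Dm x y X Y T U = Dm x y X Y T' U'" using e unfolding D_def pe qe by simp
    have "T = T'" using recT[OF pe(2), of U] recT[OF qe(2), of U'] e' by simp
    moreover have "U \<inter> X = U' \<inter> X" using recX[OF pe(2), of U] recX[OF qe(2), of U'] e' by simp
    moreover have "U \<inter> Y = U' \<inter> Y" using recY[OF pe(2), of U] recY[OF qe(2), of U'] e' by simp
    ultimately have "T = T' \<and> U = U'" using pe(3) qe(3) by blast
    then show "p = q" using pe qe by simp
  qed
  have img: "D ` Ps H (X \<union> Y) s = A"
  proof (intro equalityI subsetI)
    fix F assume "F \<in> D ` Ps H (X \<union> Y) s"
    then obtain T U where tu: "F = Dm x y X Y T U" "T \<subseteq> H" "U \<subseteq> X \<union> Y" "card T + card U = s"
      unfolding D_def Ps_def by auto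
    have "F \<subseteq> E" unfolding tu(1) Dm_def E_def using tu(2) star_subset[of "U \<inter> X" X x] star_subset[of "U \<inter> Y" Y y]
      by auto
    moreover have "card F = s" using cardD[OF tu(2,3)] tu by simp
    ultimately show "F \<in> A" unfolding A_def by simp
  next
    fix F assume F: "F \<in> A"
    define T where "T = F \<inter> H"
    define U where "U = {a \<in> X. {x,a} \<in> F} \<union> {a \<in> Y. {y,a} \<in> F}"
    have TH: "T \<subseteq> H" "U \<subseteq> X \<union> Y" unfolding T_def U_def by auto
    have UX: "U \<inter> X = {a \<in> X. {x,a} \<in> F}" "U \<inter> Y = {a \<in> Y. {y,a} \<in> F}"
      unfolding U_def using XY by auto
    have FE: "F \<subseteq> E" using F unfolding A_def by simp
    have "Dm x y X Y T U = F"
    proof (intro equalityI subsetI)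
      fix e assume "e \<in> Dm x y X Y T U"
      then show "e \<in> F" unfolding Dm_def UX T_def by (auto simp: mem_star)
    next
      fix e assume eF: "e \<in> F"
      then have "e \<in> H \<or> e \<in> star_edges x X \<or> e \<in> star_edges y Y" using FE unfolding E_def by blast
      then show "e \<in> Dm x y X Y T U" unfolding Dm_def UX T_def using eF by (auto simp: mem_star)
    qed
    moreover have "card T + card U = s" using cardD[OF TH] calculation F unfolding A_def by simp
    ultimately show "F \<in> D ` Ps H (X \<union> Y) s" unfolding D_def Ps_def using TH
      by (auto intro!: image_eqI[where x="(T,U)"])
  qed
  show ?thesis
    unfolding E_def[symmetric] l1 img[symmetric] sum.reindex[OF inj] by (simp add: D_def comp_def)
qed

definition img :: "('a \<Rightarrow> 'a) \<Rightarrow> 'a set set \<Rightarrow> 'a set set" where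
  "img b F = (\<lambda>e. b ` e) ` F"

lemma img_doubleton: "b ` {u,v} = {b u, b v}" by simp

lemma img_mem: assumes "inj b" shows "b ` e \<in> img b F \<longleftrightarrow> e \<in> F"
  using assms unfolding img_def by (auto simp: inj_image_eq_iff)

lemma img_diff: assumes "inj b" shows "img b (F - {e}) = img b F - {b ` e}"
  using assms unfolding img_def by (auto simp: inj_image_eq_iff)

lemma adj_img: assumes "bij b"
  shows "(p,q) \<in> adj_rel (img b F) \<longleftrightarrow> (inv b p, inv b q) \<in> adj_rel F"
proof -
  have i: "inj b" using assms bij_is_inj by blast
  have p: "p = b (inv b p)" "q = b (inv b q)" using assms by (simp_all add: bij_is_surj surj_f_inv_f)
  have "{p,q} = b ` {inv b p, inv b q}" using p by simp
  then have "{p,q} \<in> img b F \<longleftrightarrow> {inv b p, inv b q} \<in> F" using img_mem[OF i] by metis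
  then show ?thesis unfolding adj_rel_def by simp
qed

lemma conn_img1: assumes "bij b" "conn F u v" shows "conn (img b F) (b u) (b v)"
proof -
  have "(u,v) \<in> (adj_rel F)\<^sup>*" using assms(2) unfolding connected_in_def .
  then have "(b u, b v) \<in> (adj_rel (img b F))\<^sup>*"
  proof (induction rule: rtrancl_induct)
    case base then show ?case by simp
  next
    case (step y z)
    have "(b y, b z) \<in> adj_rel (img b F)" using step(2) adj_img[OF assms(1)] assms(1)
      by (simp add: bij_is_inj)
    then show ?case using step(3) by (rule rtrancl_into_rtrancl[rotated])
  qed
  then show ?thesis unfolding connected_in_def .
qed

lemma conn_img2: assumes "bij b" "conn (img b F) p q" shows "conn F (inv b p) (inv b q)"
proof -
  have "(p,q) \<in> (adj_rel (img b F))\<^sup>*" using assms(2) unfolding connected_in_def .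
  then have "(inv b p, inv b q) \<in> (adj_rel F)\<^sup>*"
  proof (induction rule: rtrancl_induct)
    case base then show ?case by simp
  next
    case (step y z)
    have "(inv b y, inv b z) \<in> adj_rel F" using step(2) adj_img[OF assms(1)] by simp
    then show ?case using step(3) by (rule rtrancl_into_rtrancl[rotated])
  qed
  then show ?thesis unfolding connected_in_def .
qed

lemma conn_img: assumes "bij b" shows "conn (img b F) (b u) (b v) \<longleftrightarrow> conn F u v"
proof -
  have "inv b (b u) = u" "inv b (b v) = v" using assms by (simp_all add: bij_is_inj inv_f_f)
  then show ?thesis using conn_img1[OF assms, of F u v] conn_img2[OF assms, of F "b u" "b v"] by auto
qed

lemma acyclic_img: assumes "bij b" shows "acyclic_edges (img b F) \<longleftrightarrow> acyclic_edges F"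
proof -
  have i: "inj b" using assms bij_is_inj by blast
  have s: "\<And>p. p = b (inv b p)" using assms by (simp add: bij_is_surj surj_f_inv_f)
  have "acyclic_edges (img b F) \<longleftrightarrow> (\<forall>u v. {b u, b v} \<in> img b F \<longrightarrow> \<not> conn (img b F - {{b u, b v}}) (b u) (b v))"
    unfolding acyclic_edges_def
  proof
    assume H: "\<forall>p q. {p, q} \<in> img b F \<longrightarrow> \<not> conn (img b F - {{p, q}}) p q"
    show "\<forall>u v. {b u, b v} \<in> img b F \<longrightarrow> \<not> conn (img b F - {{b u, b v}}) (b u) (b v)"
      using H by blast
  next
    assume H: "\<forall>u v. {b u, b v} \<in> img b F \<longrightarrow> \<not> conn (img b F - {{b u, b v}}) (b u) (b v)"
    show "\<forall>p q. {p, q} \<in> img b F \<longrightarrow> \<not> conn (img b F - {{p, q}}) p q"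
    proof (intro allI)
      fix p q
      have ff: "b (inv b p) = p" "b (inv b q) = q" using assms by (simp_all add: bij_is_surj surj_f_inv_f)
      have "{b (inv b p), b (inv b q)} \<in> img b F \<longrightarrow> \<not> conn (img b F - {{b (inv b p), b (inv b q)}}) (b (inv b p)) (b (inv b q))"
        using H by blast
      then show "{p, q} \<in> img b F \<longrightarrow> \<not> conn (img b F - {{p, q}}) p q" unfolding ff .
    qed
  qed
  also have "\<dots> \<longleftrightarrow> (\<forall>u v. {u,v} \<in> F \<longrightarrow> \<not> conn (F - {{u,v}}) u v)"
  proof -
    have "{b u, b v} \<in> img b F \<longleftrightarrow> {u,v} \<in> F" for u v using img_mem[OF i, of "{u,v}"] by simp
    moreover have "img b F - {{b u, b v}} = img b (F - {{u,v}})" for u v using img_diff[OF i, of F "{u,v}"] by simp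
    ultimately show ?thesis using conn_img[OF assms] by simp
  qed
  finally show ?thesis unfolding acyclic_edges_def .
qed

lemma gamma_img: assumes "bij b" "b ` V = V" shows "gamma V (img b F) = gamma V F"
proof -
  have i: "inj b" using assms bij_is_inj by blast
  have c: "cls V (img b F) (b v) = b ` cls V F v" for v
  proof (intro equalityI subsetI)
    fix w assume "w \<in> cls V (img b F) (b v)"
    then have w: "w \<in> V" "conn (img b F) (b v) w" unfolding cls_def by auto
    have "w = b (inv b w)" using assms(1) by (simp add: bij_is_surj surj_f_inv_f)
    moreover have "inv b w \<in> V" using w(1) assms(2) i by (metis imageE inv_f_f)
    moreover have "conn F v (inv b w)" using conn_img[OF assms(1), of F v "inv b w"] w(2) calculation(1) by simp
    ultimately show "w \<in> b ` cls V F v" unfolding cls_def by blast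
  next
    fix w assume "w \<in> b ` cls V F v"
    then obtain w' where "w = b w'" "w' \<in> V" "conn F v w'" unfolding cls_def by auto
    then show "w \<in> cls V (img b F) (b v)" unfolding cls_def using assms(2) conn_img[OF assms(1)] by auto
  qed
  have comps: "cls V (img b F) ` V = (\<lambda>C. b ` C) ` (cls V F ` V)"
  proof -
    have "cls V (img b F) ` V = cls V (img b F) ` (b ` V)" using assms(2) by simp
    also have "\<dots> = (\<lambda>C. b ` C) ` (cls V F ` V)" using c by (auto simp: image_image)
    finally show ?thesis .
  qed
  have inj2: "inj_on (\<lambda>C. b ` C) X" for X :: "'a set set"
    using i by (auto simp: inj_on_def inj_image_eq_iff)
  show ?thesis unfolding gamma_cls comps prod.reindex[OF inj2] comp_def
    using i by (simp add: card_image inj_on_subset)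
qed

lemma fv_img: assumes "bij b" "b ` V = V" shows "fv V (img b F) = fv V F"
  unfolding fv_def acyclic_img[OF assms(1)] gamma_img[OF assms] by (rule refl)

lemma img_Un: "img b (A \<union> B) = img b A \<union> img b B" by (auto simp: img_def)

lemma img_star: "(\<And>a. a \<in> S \<Longrightarrow> b a = a) \<Longrightarrow> img b (star_edges z S) = star_edges (b z) S"
proof -
  assume fx: "\<And>a. a \<in> S \<Longrightarrow> b a = a"
  show ?thesis
  proof (intro equalityI subsetI)
    fix e assume "e \<in> img b (star_edges z S)"
    then obtain a where a: "a \<in> S" "e = b ` {z,a}" unfolding img_def star_edges_def by blast
    then have "e = {b z, a}" using fx by simp
    then show "e \<in> star_edges (b z) S" using a(1) unfolding star_edges_def by blast
  next
    fix e assume "e \<in> star_edges (b z) S"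
    then obtain a where a: "a \<in> S" "e = {b z, a}" unfolding mem_star by blast
    then have "e = b ` {z,a}" using fx by simp
    moreover have "{z,a} \<in> star_edges z S" using a by simp
    ultimately show "e \<in> img b (star_edges z S)" unfolding img_def by blast
  qed
qed

theorem mainTheorem2:
  fixes V :: "'a set" and E :: "'a set set" and K :: "'a set" and x y :: 'a
  assumes "simple_graph V E"
    and "K \<subseteq> V" and "x \<in> K" and "y \<in> K" and "x \<noteq> y"
    and "symmetric_Kxy V E K x y"
  shows "\<forall>s < card V. lap_coeff V E s \<ge> lap_coeff V (Kxy_op E K x y) s"
proof (intro allI impI)
  fix s :: nat
  note sg = assms(1)
  have fV: "finite V" using sg unfolding simple_graph_def by blast
  have edges: "\<And>e. e \<in> E \<Longrightarrow> \<exists>u v. e = {u,v} \<and> u \<noteq> v \<and> u \<in> V \<and> v \<in> V"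
    using sg unfolding simple_graph_def by blast
  have EV: "E \<subseteq> Pow V" using edges by blast
  have fE: "finite E" using EV fV by (meson finite_Pow_iff finite_subset)
  define X where "X = Xset E K x y"
  define Y where "Y = Xset E K y x"
  define H where "H = E - (star_edges x X \<union> star_edges y Y)"
  obtain \<alpha> where aut: "graph_automorphism V H \<alpha>" and axy: "\<alpha> x = y" "\<alpha> y = x"
    and afix: "\<And>v. v \<in> X \<union> Y \<Longrightarrow> \<alpha> v = v"
    using assms(6) unfolding symmetric_Kxy_def X_def[symmetric] Y_def[symmetric] H_def[symmetric] by blast
  have nbV: "nbhd E v \<subseteq> V" for v
  proof
    fix u assume "u \<in> nbhd E v"
    then have "{u,v} \<in> E" by (simp add: nbhd_def)
    then show "u \<in> V" using EV by blast
  qed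
  have XV: "X \<subseteq> V" "Y \<subseteq> V" unfolding X_def Y_def Xset_def using nbV by blast+
  have fX: "finite X" "finite Y" using XV fV finite_subset by auto
  have XY: "X \<inter> Y = {}" unfolding X_def Y_def Xset_def by blast
  have xyn: "x \<notin> X \<union> Y" "y \<notin> X \<union> Y" using assms(3,4) unfolding X_def Y_def Xset_def by blast+
  have xX: "{x,a} \<in> E" if "a \<in> X" for a using that unfolding X_def Xset_def nbhd_def by (auto simp: insert_commute)
  have yY: "{y,a} \<in> E" if "a \<in> Y" for a using that unfolding Y_def Xset_def nbhd_def by (auto simp: insert_commute)
  have yX: "{y,a} \<notin> E" if "a \<in> X" for a using that unfolding X_def Xset_def nbhd_def by (auto simp: insert_commute)
  have xY: "{x,a} \<notin> E" if "a \<in> Y" for a using that unfolding Y_def Xset_def nbhd_def by (auto simp: insert_commute)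
  have sX: "star_edges x X \<subseteq> E" "star_edges y Y \<subseteq> E" using xX yY by (auto simp: mem_star)
  have d3: "star_edges x X \<inter> star_edges y Y = {}"
  proof -
    have "{x,a} \<noteq> {y,b}" if "a \<in> X" "b \<in> Y" for a b
      using that xyn assms(5) by (auto simp: doubleton_eq_iff)
    then show ?thesis by (auto simp: mem_star)
  qed
  have Eeq: "E = H \<union> star_edges x X \<union> star_edges y Y" unfolding H_def using sX by blast
  have E'eq: "Kxy_op E K x y = H \<union> star_edges y X \<union> star_edges y Y"
    unfolding Kxy_op_def X_def[symmetric] H_def using sX d3 by blast
  have fH: "finite H" unfolding H_def using fE by simp
  have dH1: "H \<inter> star_edges x X = {}" "H \<inter> star_edges y Y = {}" unfolding H_def by blast+
  have dH2: "H \<inter> star_edges y X = {}" using yX unfolding H_def by (auto simp: mem_star)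
  have d4: "star_edges y X \<inter> star_edges y Y = {}" using XY by (auto simp: mem_star doubleton_eq_iff; blast)
  define P where "P = Ps H (X \<union> Y) s"
  have fP: "finite P" unfolding P_def using fH fX by (simp add: finite_Ps)
  have L: "lap_coeff V E s = (\<Sum>p\<in>P. fv V (Dm x y X Y (fst p) (snd p)))"
    unfolding P_def by (subst Eeq) (rule decomp[OF fH fX XY dH1 d3])
  have R: "lap_coeff V (Kxy_op E K x y) s = (\<Sum>p\<in>P. fv V (Dm y y X Y (fst p) (snd p)))"
    unfolding P_def E'eq by (rule decomp[OF fH fX XY dH2 dH1(2) d4])
  define \<beta> where "\<beta> = (\<lambda>v. if v \<in> V then \<alpha> v else v)"
  have abij: "bij_betw \<alpha> V V" using aut unfolding graph_automorphism_def by blast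
  have bV: "\<beta> ` V = V" unfolding \<beta>_def using abij by (simp add: bij_betw_def)
  have binj: "inj \<beta>"
  proof (rule injI)
    fix u v assume e: "\<beta> u = \<beta> v"
    have am: "\<alpha> w \<in> V" if "w \<in> V" for w using abij that by (meson bij_betwE)
    have ai: "inj_on \<alpha> V" using abij by (simp add: bij_betw_def)
    show "u = v"
    proof (cases "u \<in> V")
      case uV: True
      show ?thesis
      proof (cases "v \<in> V")
        case True
        then have "\<alpha> u = \<alpha> v" using e uV unfolding \<beta>_def by simp
        then show ?thesis using ai uV True unfolding inj_on_def by blast
      next
        case False
        then have "\<alpha> u = v" using e uV unfolding \<beta>_def by simp
        then show ?thesis using am[OF uV] False by simp
      qed
    next
      case uV: False
      show ?thesis
      proof (cases "v \<in> V")
        case True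
        then have "u = \<alpha> v" using e uV unfolding \<beta>_def by simp
        then show ?thesis using am[OF True] uV by simp
      next
        case False
        then show ?thesis using e uV unfolding \<beta>_def by simp
      qed
    qed
  qed
  have bsurj: "surj \<beta>"
  proof -
    have "v \<in> range \<beta>" for v
    proof (cases "v \<in> V")
      case True
      then obtain w where "v = \<beta> w" using bV by (metis imageE)
      then show ?thesis by simp
    next
      case False
      then have "v = \<beta> v" unfolding \<beta>_def by simp
      then show ?thesis by (rule range_eqI)
    qed
    then show ?thesis by blast
  qed
  have autH: "\<And>u v. u \<in> V \<Longrightarrow> v \<in> V \<Longrightarrow> {u,v} \<in> H \<longleftrightarrow> {\<alpha> u, \<alpha> v} \<in> H"
    using aut unfolding graph_automorphism_def by blast
  have bbij: "bij \<beta>" using binj bsurj by (simp add: bij_def)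
  have xyV: "x \<in> V" "y \<in> V" using assms(2,3,4) by auto
  have bxy: "\<beta> x = y" "\<beta> y = x" unfolding \<beta>_def using axy xyV by auto
  have bfix: "\<And>a. a \<in> X \<union> Y \<Longrightarrow> \<beta> a = a" unfolding \<beta>_def using afix by auto
  have imgH: "img \<beta> T \<subseteq> H" if "T \<subseteq> H" for T
  proof
    fix e assume "e \<in> img \<beta> T"
    then obtain e' where e': "e' \<in> T" "e = \<beta> ` e'" unfolding img_def by blast
    then have "e' \<in> E" using that unfolding H_def by blast
    then obtain u v where uv: "e' = {u,v}" "u \<in> V" "v \<in> V" using edges by blast
    have "{u,v} \<in> H" using e'(1) uv(1) that by blast
    then have "{\<alpha> u, \<alpha> v} \<in> H" using autH[OF uv(2,3)] by simp
    then show "e \<in> H" using e' uv unfolding \<beta>_def by simp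
  qed
  have inj_img: "inj_on (img \<beta>) A" for A
  proof -
    have i2: "inj (\<lambda>e. \<beta> ` e)" by (simp add: inj_def inj_image_eq_iff[OF binj])
    show ?thesis unfolding inj_on_def img_def by (simp add: inj_image_eq_iff[OF i2])
  qed
  have card_img: "card (img \<beta> T) = card T" for T
  proof -
    have i2: "inj (\<lambda>e. \<beta> ` e)" by (simp add: inj_def inj_image_eq_iff[OF binj])
    show ?thesis unfolding img_def by (rule card_image[OF inj_on_subset[OF i2 subset_UNIV]])
  qed
  define \<sigma> where "\<sigma> = (\<lambda>p :: 'a set set \<times> 'a set. (img \<beta> (fst p), snd p))"
  have sP: "\<sigma> ` P \<subseteq> P"
  proof
    fix q assume "q \<in> \<sigma> ` P"
    then obtain T U where tu: "(T,U) \<in> P" "q = (img \<beta> T, U)" unfolding \<sigma>_def by auto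
    then have t: "T \<subseteq> H" "U \<subseteq> X \<union> Y" "card T + card U = s" unfolding P_def Ps_def by auto
    have "img \<beta> T \<subseteq> H" by (rule imgH[OF t(1)])
    then show "q \<in> P" unfolding tu(2) P_def Ps_def using t card_img[of T] by simp
  qed
  have sinj: "inj_on \<sigma> P"
  proof (rule inj_onI)
    fix p q assume "p \<in> P" "q \<in> P" "\<sigma> p = \<sigma> q"
    then have "img \<beta> (fst p) = img \<beta> (fst q)" "snd p = snd q" unfolding \<sigma>_def by auto
    moreover have "fst p = fst q" using inj_onD[OF inj_img[of UNIV] calculation(1)] by simp
    ultimately show "p = q" by (simp add: prod_eq_iff)
  qed
  have sPP: "\<sigma> ` P = P" using endo_inj_surj[OF fP sP sinj] .
  have reidx: "(\<Sum>p\<in>P. f p) = (\<Sum>p\<in>P. f (\<sigma> p))" for f :: "_ \<Rightarrow> nat"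
  proof -
    have "(\<Sum>p\<in>P. f p) = (\<Sum>p\<in>\<sigma> ` P. f p)" unfolding sPP ..
    also have "\<dots> = (\<Sum>p\<in>P. f (\<sigma> p))" using sum.reindex[OF sinj] by (simp add: comp_def)
    finally show ?thesis .
  qed
  have Uparts: "U \<inter> X \<subseteq> X \<union> Y" "U \<inter> Y \<subseteq> X \<union> Y" "U \<subseteq> X \<union> Y \<Longrightarrow> U \<subseteq> X \<union> Y" for U by auto
  have istar: "img \<beta> (star_edges z (snd p \<inter> W)) = star_edges (\<beta> z) (snd p \<inter> W)"
    if "W = X \<or> W = Y" for z p W
  proof -
    have "\<And>a. a \<in> snd p \<inter> W \<Longrightarrow> \<beta> a = a" using bfix that by blast
    then show ?thesis by (rule img_star)
  qed
  have iempty: "img \<beta> {} = {}" by (simp add: img_def)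
  have Lsig: "fv V (Dm x y X Y (fst (\<sigma> p)) (snd (\<sigma> p)))
      = fv V (fst p \<union> star_edges x (snd p \<inter> Y) \<union> star_edges y (snd p \<inter> X))" for p
  proof -
    have "img \<beta> (fst p \<union> star_edges x (snd p \<inter> Y) \<union> star_edges y (snd p \<inter> X))
       = Dm x y X Y (fst (\<sigma> p)) (snd (\<sigma> p))"
      unfolding Dm_def \<sigma>_def img_Un istar[of Y x p, simplified] istar[of X y p, simplified] bxy
      by (simp add: Un_ac)
    then show ?thesis using fv_img[OF bbij bV, of "fst p \<union> star_edges x (snd p \<inter> Y) \<union> star_edges y (snd p \<inter> X)"] by simp
  qed
  have Rsig: "fv V (Dm y y X Y (fst (\<sigma> p)) (snd (\<sigma> p)))
      = fv V (fst p \<union> star_edges x (snd p \<inter> X \<union> snd p \<inter> Y) \<union> star_edges y {})" for p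
  proof -
    have "img \<beta> (fst p \<union> star_edges x (snd p \<inter> X \<union> snd p \<inter> Y) \<union> star_edges y {})
       = Dm y y X Y (fst (\<sigma> p)) (snd (\<sigma> p))"
      unfolding Dm_def \<sigma>_def star_Un star_empty img_Un iempty istar[of X x p, simplified] istar[of Y x p, simplified] bxy
      by (simp add: Un_ac)
    then show ?thesis using fv_img[OF bbij bV, of "fst p \<union> star_edges x (snd p \<inter> X \<union> snd p \<inter> Y) \<union> star_edges y {}"] by simp
  qed
  have Rdir: "fv V (Dm y y X Y (fst p) (snd p)) = fv V (fst p \<union> star_edges x {} \<union> star_edges y (snd p \<inter> X \<union> snd p \<inter> Y))" for p
    unfolding Dm_def star_Un by (simp add: Un_assoc)
  have pw: "fv V (Dm y y X Y (fst p) (snd p)) + fv V (Dm y y X Y (fst (\<sigma> p)) (snd (\<sigma> p)))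
     \<le> fv V (Dm x y X Y (fst p) (snd p)) + fv V (Dm x y X Y (fst (\<sigma> p)) (snd (\<sigma> p)))" if pP: "p \<in> P" for p
  proof -
    obtain T U where tu: "p = (T,U)" "T \<subseteq> H" "U \<subseteq> X \<union> Y" using pP unfolding P_def Ps_def by auto
    have ne: "\<forall>a\<in>U \<inter> X \<union> U \<inter> Y. {x,a} \<notin> T \<and> {y,a} \<notin> T"
    proof
      fix a assume a: "a \<in> U \<inter> X \<union> U \<inter> Y"
      have "{x,a} \<notin> H"
        using a xY unfolding H_def by (auto simp: mem_star)
      moreover have "{y,a} \<notin> H"
        using a yX unfolding H_def by (auto simp: mem_star)
      ultimately show "{x,a} \<notin> T \<and> {y,a} \<notin> T" using tu(2) by blast
    qed
    have k: "fv V (T \<union> star_edges x {} \<union> star_edges y (U \<inter> X \<union> U \<inter> Y)) + fv V (T \<union> star_edges x (U \<inter> X \<union> U \<inter> Y) \<union> star_edges y {})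
      \<le> fv V (T \<union> star_edges x (U \<inter> X) \<union> star_edges y (U \<inter> Y)) + fv V (T \<union> star_edges x (U \<inter> Y) \<union> star_edges y (U \<inter> X))"
      apply (rule key[OF fV xyV assms(5)])
      using XV XY xyn ne by auto
    show ?thesis using k unfolding Rsig Lsig unfolding Rdir unfolding tu(1) by (simp add: Dm_def)
  qed
  have "2 * lap_coeff V (Kxy_op E K x y) s
      = (\<Sum>p\<in>P. fv V (Dm y y X Y (fst p) (snd p)) + fv V (Dm y y X Y (fst (\<sigma> p)) (snd (\<sigma> p))))"
    unfolding R sum.distrib reidx[of "\<lambda>p. fv V (Dm y y X Y (fst p) (snd p))", symmetric] by simp
  also have "\<dots> \<le> (\<Sum>p\<in>P. fv V (Dm x y X Y (fst p) (snd p)) + fv V (Dm x y X Y (fst (\<sigma> p)) (snd (\<sigma> p))))"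
    by (rule sum_mono) (rule pw)
  also have "\<dots> = 2 * lap_coeff V E s"
    unfolding L sum.distrib reidx[of "\<lambda>p. fv V (Dm x y X Y (fst p) (snd p))", symmetric] by simp
  finally show "lap_coeff V (Kxy_op E K x y) s \<le> lap_coeff V E s" by simp
qed

end
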